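(* Let $I$ be a non-degenerate interval and $f:I\to\mathbb{R}$ continuous, and let $D(f)$ be the set of points where $f$ has a derivative (finite or infinite). Then the set $\{(x,f(x)):x\in D(f)\}$ can be covered by countably many symmetrically $1$-monotone sets.
   Context: A metric space $(X,d)$ is symmetrically $1$-monotone if there is a linear order $<$ on $X$ such that $\max(d(x,y),d(y,z))\le d(x,z)$ whenever $x<y<z$. Subsets of $\mathbb{R}^2$ carry the Euclidean metric. *)

theory Defs
  imports "HOL-Analysis.Analysis"
begin

definition sym_1_monotone :: "'a::metric_space set \<Rightarrow> bool" where
  "sym_1_monotone S \<longleftrightarrow>
     (\<exists>R. linear_order_on S R \<and>
       (\<forall>x\<in>S. \<forall>y\<in>S. \<forall>z\<in>S.
          (x, y) \<in> R \<and> x \<noteq> y \<and> (y, z) \<in> R \<and> y \<noteq> z \<longrightarrow>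
          max (dist x y) (dist y z) \<le> dist x z))"

definition has_gen_deriv :: "(real \<Rightarrow> real) \<Rightarrow> real set \<Rightarrow> real \<Rightarrow> bool" where
  "has_gen_deriv f I x \<longleftrightarrow>
     (\<exists>L. (f has_real_derivative L) (at x within I)) \<or>
     filterlim (\<lambda>y. (f y - f x) / (y - x)) at_top (at x within I) \<or>
     filterlim (\<lambda>y. (f y - f x) / (y - x)) at_bot (at x within I)"

definition deriv_set :: "(real \<Rightarrow> real) \<Rightarrow> real set \<Rightarrow> real set" where
  "deriv_set f I = {x \<in> I. has_gen_deriv f I x}"

end

theory Submission
  imports Defs
begin

lemma graph_mono:
  fixes A :: "real set" and f :: "real \<Rightarrow> real"
  assumes H: "\<And>x y z. x\<in>A \<Longrightarrow> y\<in>A \<Longrightarrow> z\<in>A \<Longrightarrow> x<y \<Longrightarrow> y<z \<Longrightarrow>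
      (y-x)*(z-y) + (f y - f x)*(f z - f y) \<ge> 0"
  shows "sym_1_monotone ((\<lambda>x. (x, f x)) ` A)"
proof -
  define S where "S = (\<lambda>x. (x, f x)) ` A"
  define R where "R = {(p,q). p\<in>S \<and> q\<in>S \<and> fst p \<le> fst q}"
  have lin: "linear_order_on S R"
    unfolding linear_order_on_def partial_order_on_def preorder_on_def refl_on_def
      trans_def antisym_def total_on_def R_def S_def by auto
  have key: "max (dist p q) (dist q r) \<le> dist p r"
    if hh: "p\<in>S" "q\<in>S" "r\<in>S" "(p,q)\<in>R" "p\<noteq>q" "(q,r)\<in>R" "q\<noteq>r" for p q r
  proof -
    obtain x y z where xyz: "x\<in>A" "y\<in>A" "z\<in>A" "p=(x,f x)" "q=(y,f y)" "r=(z,f z)"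
      using hh(1-3) unfolding S_def by auto
    have "x<y" "y<z" using hh(4-7) xyz unfolding R_def by auto
    then have h: "(y-x)*(z-y) + (f y - f x)*(f z - f y) \<ge> 0" using H xyz by auto
    have e1: "(z-x)^2 + (f z - f x)^2 = ((y-x)^2 + (f y - f x)^2) + ((z-y)^2 + (f z - f y)^2)
         + 2*((y-x)*(z-y) + (f y - f x)*(f z - f y))"
      by (simp add: power2_eq_square algebra_simps)
    have d: "dist (a, f a) (b, f b) = sqrt ((b-a)^2 + (f b - f a)^2)" for a b
      by (simp add: dist_Pair_Pair dist_real_def power2_abs power2_commute)
    have "(y-x)^2 + (f y - f x)^2 \<le> (z-x)^2 + (f z - f x)^2"
         "(z-y)^2 + (f z - f y)^2 \<le> (z-x)^2 + (f z - f x)^2"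
      using e1 h by (auto intro: add_nonneg_nonneg)
    then show ?thesis using xyz d by (simp add: real_sqrt_le_mono)
  qed
  show ?thesis unfolding sym_1_monotone_def S_def[symmetric]
    using lin key by blast
qed

definition K :: "nat \<Rightarrow> real set" where
  "K k = (if k = 0 then {0<..} else if k = 1 then {..<0} else {-1<..<1})"

lemma K_prod: "s \<in> K k \<Longrightarrow> t \<in> K k \<Longrightarrow> s*t \<ge> -1"
proof -
  assume a: "s \<in> K k" "t \<in> K k"
  show ?thesis
  proof (cases "k = 0 \<or> k = 1")
    case True then show ?thesis using a
      by (auto simp: K_def intro: order_trans[OF _ mult_nonneg_nonneg] mult_nonpos_nonpos
          less_imp_le order_trans[OF _ mult_nonpos_nonpos])
  next
    case False
    then have "\<bar>s\<bar> < 1" "\<bar>t\<bar> < 1" using a by (auto simp: K_def)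
    then have "\<bar>s*t\<bar> \<le> 1" by (simp add: abs_mult mult_le_one)
    then show ?thesis by linarith
  qed
qed

lemma local_slope:
  assumes "x \<in> deriv_set f I"
  shows "\<exists>k. \<exists>d>0. \<forall>y\<in>I. y \<noteq> x \<and> dist y x < d \<longrightarrow> (f y - f x)/(y - x) \<in> K k"
proof -
  let ?g = "\<lambda>y. (f y - f x)/(y - x)"
  have "\<exists>k. eventually (\<lambda>y. ?g y \<in> K k) (at x within I)"
  proof -
    have "has_gen_deriv f I x" using assms by (simp add: deriv_set_def)
    then consider L where "(f has_real_derivative L) (at x within I)"
      | "filterlim ?g at_top (at x within I)" | "filterlim ?g at_bot (at x within I)"
      unfolding has_gen_deriv_def by blast
    then show ?thesis
    proof cases
      case (1 L)
      then have t: "(?g \<longlongrightarrow> L) (at x within I)" by (simp add: has_field_derivative_iff)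
      consider "L > 0" | "L < 0" | "L = 0" by linarith
      then show ?thesis
      proof cases
        case 1
        then have "eventually (\<lambda>y. ?g y > 0) (at x within I)" using order_tendstoD(1)[OF t] by blast
        then show ?thesis by (intro exI[of _ 0]) (auto simp: K_def elim: eventually_mono)
      next
        case 2
        then have "eventually (\<lambda>y. ?g y < 0) (at x within I)" using order_tendstoD(2)[OF t] by blast
        then show ?thesis by (intro exI[of _ 1]) (auto simp: K_def elim: eventually_mono)
      next
        case 3
        then have a: "eventually (\<lambda>y. ?g y > -1) (at x within I)" "eventually (\<lambda>y. ?g y < 1) (at x within I)"
          using order_tendstoD[OF t] by auto
        show ?thesis by (intro exI[of _ 2]) (use eventually_conj[OF a] in \<open>auto simp: K_def elim: eventually_mono\<close>)
      qed
    next
      case 2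
      then have "eventually (\<lambda>y. ?g y > 0) (at x within I)" by (simp add: filterlim_at_top_dense)
      then show ?thesis by (intro exI[of _ 0]) (auto simp: K_def elim: eventually_mono)
    next
      case 3
      then have "eventually (\<lambda>y. ?g y < 0) (at x within I)" by (simp add: filterlim_at_bot_dense)
      then show ?thesis by (intro exI[of _ 1]) (auto simp: K_def elim: eventually_mono)
    qed
  qed
  then show ?thesis by (simp add: eventually_at)
qed

theorem corollary6p4:
  fixes I :: "real set" and f :: "real \<Rightarrow> real"
  assumes "is_interval I" and "\<exists>a\<in>I. \<exists>b\<in>I. a < b"
    and "continuous_on I f"
  shows "\<exists>C :: (real \<times> real) set set. countable C \<and> (\<forall>S\<in>C. sym_1_monotone S) \<and>
           (\<lambda>x. (x, f x)) ` deriv_set f I \<subseteq> \<Union>C"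
proof -
  define P where "P k n m = {x \<in> deriv_set f I.
      (\<forall>y\<in>I. y \<noteq> x \<and> dist y x < 1/real (Suc n) \<longrightarrow> (f y - f x)/(y - x) \<in> K k) \<and>
      of_int m \<le> x * real (Suc n) \<and> x * real (Suc n) < of_int m + 1}" for k n and m :: int
  define C where "C = (\<lambda>(k,n,m). (\<lambda>x. (x, f x)) ` P k n m) ` (UNIV :: (nat \<times> nat \<times> int) set)"
  have "countable C" unfolding C_def by simp
  moreover have "sym_1_monotone ((\<lambda>x. (x, f x)) ` P k n m)" for k n m
  proof (rule graph_mono)
    have sl: "(f b - f a)/(b - a) \<in> K k" if "a \<in> P k n m" "b \<in> P k n m" "a < b" for a b
    proof -
      have "b - a < 1/real (Suc n)"
        using that by (auto simp: P_def field_simps)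
      moreover have "b \<in> I" using that by (auto simp: P_def deriv_set_def)
      ultimately show ?thesis using that by (auto simp: P_def dist_real_def)
    qed
    fix x y z assume a: "x \<in> P k n m" "y \<in> P k n m" "z \<in> P k n m" "x < y" "y < z"
    define s where "s = (f y - f x)/(y - x)"
    define t where "t = (f z - f y)/(z - y)"
    have st: "s*t \<ge> -1" using sl a K_prod unfolding s_def t_def by blast
    have e: "f y - f x = s*(y-x)" "f z - f y = t*(z-y)" using a by (auto simp: s_def t_def)
    have "(y-x)*(z-y) + (f y - f x)*(f z - f y) = (y-x)*(z-y) + (s*(y-x))*(t*(z-y))"
      by (simp only: e)
    also have "\<dots> = ((y-x)*(z-y))*(1 + s*t)"
      by (simp add: algebra_simps)
    also have "\<dots> \<ge> 0" using a st by (intro mult_nonneg_nonneg) auto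
    finally show "(y-x)*(z-y) + (f y - f x)*(f z - f y) \<ge> 0" .
  qed
  then have "\<forall>S\<in>C. sym_1_monotone S" unfolding C_def by auto
  moreover have "(\<lambda>x. (x, f x)) ` deriv_set f I \<subseteq> \<Union>C"
  proof
    fix p assume "p \<in> (\<lambda>x. (x, f x)) ` deriv_set f I"
    then obtain x where x: "x \<in> deriv_set f I" "p = (x, f x)" by auto
    obtain k d where kd: "d > 0" "\<forall>y\<in>I. y \<noteq> x \<and> dist y x < d \<longrightarrow> (f y - f x)/(y - x) \<in> K k"
      using local_slope[OF x(1)] by blast
    obtain n where n: "1 / real (Suc n) < d" using reals_Archimedean[OF kd(1)]
      by (metis inverse_eq_divide)
    define m where "m = floor (x * real (Suc n))"
    have "x \<in> P k n m" using x kd n unfolding P_def m_def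
      by (auto simp: floor_le_iff)
    then show "p \<in> \<Union>C" using x unfolding C_def by blast
  qed
  ultimately show ?thesis by blast
qed

end
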